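(* Let $\nu\in\mathcal P_{2,0}(\mathbb R^d)$ and let $\mathcal D\subset\mathcal P_2(\mathbb R^d)$ be a cone. For every $\mu^*\in\operatorname{argmax}_{\mu\in\mathcal D\cap\mathcal M^K_\nu}\operatorname{Var}(\mu)$ and every $\pi^*\in\operatorname{argmax}_{\pi\in\Pi(\mu^*,\nu)}\int\langle x,y\rangle\,d\pi(x,y)$, $$\int\langle x,y\rangle\,d\pi^*(x,y)=\int|x|^2\,d\mu^*(x).$$ If in addition $\mathcal D$ is translation invariant, then every such $\mu^*$ satisfies $\int x\,d\mu^*(x)=0$.
   Context: $\mathcal P_2(\mathbb R^d)$: Borel probability measures with finite second moment; $\mathcal P_{2,0}$: those with zero mean. $\Pi(\mu,\nu)$: couplings. $\operatorname{Var}(\mu)=\int|x-\int z\,d\mu|^2d\mu$. Kantorovich dominance: $\mu\preceq_K\nu$ iff there is $\pi\in\Pi(\mu,\nu)$ with $\int\langle x-b_\nu,y-x\rangle\,d\pi=0$, $b_\nu=\int y\,d\nu$; $\mathcal M^K_\nu=\{\mu\in\mathcal P_2(\mathbb R^d):\mu\preceq_K\nu\}$. The dilation $\lambda_\#\mu$ is the law of $\lambda X$, $X\sim\mu$. $\mathcal D$ is a cone if $\lambda_\#\mu\in\mathcal D$ for all $\mu\in\mathcal D$, $\lambda\ge0$; translation invariant if $(T_k)_\#\mu\in\mathcal D$ for all $\mu\in\mathcal D$, $k\in\mathbb R^d$, where $T_k(x)=x+k$. *)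

theory Defs
  imports "HOL-Probability.Probability"
begin

definition P2 :: "('a::euclidean_space) measure set" where
  "P2 = {M. sets M = sets borel \<and> prob_space M \<and> integrable M (\<lambda>x. norm x ^ 2)}"

definition mean :: "('a::euclidean_space) measure \<Rightarrow> 'a" where
  "mean M = (\<integral>x. x \<partial>M)"

definition P20 :: "('a::euclidean_space) measure set" where
  "P20 = {M \<in> P2. mean M = 0}"

definition Var :: "('a::euclidean_space) measure \<Rightarrow> real" where
  "Var M = (\<integral>x. (norm (x - mean M))^2 \<partial>M)"

definition couplings :: "('a::euclidean_space) measure \<Rightarrow> 'a measure \<Rightarrow> ('a \<times> 'a) measure set" where
  "couplings \<mu> \<nu> = {\<pi>. sets \<pi> = sets borel \<and> prob_space \<pi> \<and>
      distr \<pi> borel fst = \<mu> \<and> distr \<pi> borel snd = \<nu>}"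

definition kantorovich_dom :: "('a::euclidean_space) measure \<Rightarrow> 'a measure \<Rightarrow> bool" where
  "kantorovich_dom \<mu> \<nu> \<longleftrightarrow> (\<exists>\<pi>\<in>couplings \<mu> \<nu>.
      (\<integral>p. inner (fst p - mean \<nu>) (snd p - fst p) \<partial>\<pi>) = 0)"

definition MK :: "('a::euclidean_space) measure \<Rightarrow> 'a measure set" where
  "MK \<nu> = {\<mu> \<in> P2. kantorovich_dom \<mu> \<nu>}"

definition is_cone :: "('a::euclidean_space) measure set \<Rightarrow> bool" where
  "is_cone D \<longleftrightarrow> (\<forall>\<mu>\<in>D. \<forall>l::real. l \<ge> 0 \<longrightarrow> distr \<mu> borel (\<lambda>x. l *\<^sub>R x) \<in> D)"

definition translation_invariant :: "('a::euclidean_space) measure set \<Rightarrow> bool" where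
  "translation_invariant D \<longleftrightarrow> (\<forall>\<mu>\<in>D. \<forall>k. distr \<mu> borel (\<lambda>x. x + k) \<in> D)"

end

theory Submission
  imports Defs
begin

lemma meas_sets:
  fixes f :: "'a::euclidean_space \<Rightarrow> 'b::euclidean_space"
  assumes "sets M = sets borel" "continuous_on UNIV f"
  shows "f \<in> M \<rightarrow>\<^sub>M borel"
  using measurable_cong_sets[OF assms(1) refl, of borel] borel_measurable_continuous_onI[OF assms(2)]
  by metis

lemma meas_sets2:
  fixes f :: "'a::euclidean_space \<times> 'a \<Rightarrow> 'b::euclidean_space"
  assumes "sets M = sets borel" "continuous_on UNIV f"
  shows "f \<in> M \<rightarrow>\<^sub>M borel"
  using measurable_cong_sets[OF assms(1) refl, of borel] borel_measurable_continuous_onI[OF assms(2)]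
  by metis

lemma meas_sets3:
  fixes f :: "'a::euclidean_space \<times> 'a \<Rightarrow> 'a \<times> 'a"
  assumes "sets M = sets borel" "continuous_on UNIV f"
  shows "f \<in> M \<rightarrow>\<^sub>M borel"
  using measurable_cong_sets[OF assms(1) refl, of borel] borel_measurable_continuous_onI[OF assms(2)]
  by metis

lemma P2_D:
  assumes "\<mu> \<in> P2"
  shows "sets \<mu> = sets borel" "prob_space \<mu>" "integrable \<mu> (\<lambda>x. norm x ^ 2)"
  using assms unfolding P2_def by auto

lemma real_le_sq: "(t::real) \<le> 1 + t^2"
  using zero_le_square[of "t - 1/2"] by (simp add: power2_eq_square algebra_simps)

lemma P2_int_id:
  assumes "\<mu> \<in> P2"
  shows "integrable \<mu> (\<lambda>x. x)"
proof -
  interpret prob_space \<mu> using P2_D[OF assms] by simp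
  have "integrable \<mu> (\<lambda>x. 1 + norm x ^ 2)"
    using P2_D(3)[OF assms] by simp
  moreover have "(\<lambda>x. x) \<in> borel_measurable \<mu>"
    by (rule meas_sets[OF P2_D(1)[OF assms]]) (intro continuous_intros)
  moreover have "AE x in \<mu>. norm x \<le> norm (1 + norm x ^ 2)"
    using real_le_sq by (auto intro!: AE_I2 simp: abs_of_nonneg)
  ultimately show ?thesis by (rule Bochner_Integration.integrable_bound)
qed

lemma P2_int_sqa:
  assumes "\<mu> \<in> P2"
  shows "integrable \<mu> (\<lambda>x. norm (x - a) ^ 2)"
proof -
  interpret prob_space \<mu> using P2_D[OF assms] by simp
  have "integrable \<mu> (\<lambda>x. 2 * norm x ^ 2 + 2 * norm a ^ 2)"
    using P2_D(3)[OF assms] by simp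
  moreover have "(\<lambda>x. norm (x - a) ^ 2) \<in> borel_measurable \<mu>"
    by (rule meas_sets[OF P2_D(1)[OF assms]]) (intro continuous_intros)
  moreover have "AE x in \<mu>. norm (norm (x - a) ^ 2) \<le> norm (2 * norm x ^ 2 + 2 * norm a ^ 2)"
  proof (intro AE_I2)
    fix x
    have "norm (x - a) \<le> norm x + norm a" by (rule norm_triangle_ineq4)
    hence "norm (x - a) ^ 2 \<le> (norm x + norm a)^2" by (simp add: power_mono)
    also have "\<dots> \<le> 2 * norm x ^ 2 + 2 * norm a ^ 2"
      using zero_le_square[of "norm x - norm a"] by (simp add: power2_eq_square algebra_simps)
    finally show "norm (norm (x - a) ^ 2) \<le> norm (2 * norm x ^ 2 + 2 * norm a ^ 2)" by simp
  qed
  ultimately show ?thesis by (rule Bochner_Integration.integrable_bound)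
qed


lemma coup_D:
  assumes "\<pi> \<in> couplings \<mu> \<nu>"
  shows "sets \<pi> = sets borel" "prob_space \<pi>" "distr \<pi> borel fst = \<mu>" "distr \<pi> borel snd = \<nu>"
  using assms unfolding couplings_def by auto

lemma coup_fst_meas:
  assumes "\<pi> \<in> couplings \<mu> (\<nu>::'a::euclidean_space measure)"
  shows "fst \<in> \<pi> \<rightarrow>\<^sub>M borel" "snd \<in> \<pi> \<rightarrow>\<^sub>M borel"
  by (rule meas_sets2[OF coup_D(1)[OF assms]], intro continuous_intros)+

lemma coup_int_fst:
  fixes f :: "'a::euclidean_space \<Rightarrow> 'b::euclidean_space"
  assumes "\<pi> \<in> couplings \<mu> \<nu>" "continuous_on UNIV f"
  shows "integral\<^sup>L \<pi> (\<lambda>p. f (fst p)) = integral\<^sup>L \<mu> f"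
    "integrable \<pi> (\<lambda>p. f (fst p)) \<longleftrightarrow> integrable \<mu> f"
proof -
  have f: "f \<in> borel_measurable borel" using assms(2) by (rule borel_measurable_continuous_onI)
  show "integral\<^sup>L \<pi> (\<lambda>p. f (fst p)) = integral\<^sup>L \<mu> f"
    using integral_distr[OF coup_fst_meas(1)[OF assms(1)] f] coup_D(3)[OF assms(1)] by simp
  show "integrable \<pi> (\<lambda>p. f (fst p)) \<longleftrightarrow> integrable \<mu> f"
    using integrable_distr_eq[OF coup_fst_meas(1)[OF assms(1)] f] coup_D(3)[OF assms(1)] by simp
qed

lemma coup_int_snd:
  fixes f :: "'a::euclidean_space \<Rightarrow> 'b::euclidean_space"
  assumes "\<pi> \<in> couplings \<mu> \<nu>" "continuous_on UNIV f"
  shows "integral\<^sup>L \<pi> (\<lambda>p. f (snd p)) = integral\<^sup>L \<nu> f"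
    "integrable \<pi> (\<lambda>p. f (snd p)) \<longleftrightarrow> integrable \<nu> f"
proof -
  have f: "f \<in> borel_measurable borel" using assms(2) by (rule borel_measurable_continuous_onI)
  show "integral\<^sup>L \<pi> (\<lambda>p. f (snd p)) = integral\<^sup>L \<nu> f"
    using integral_distr[OF coup_fst_meas(2)[OF assms(1)] f] coup_D(4)[OF assms(1)] by simp
  show "integrable \<pi> (\<lambda>p. f (snd p)) \<longleftrightarrow> integrable \<nu> f"
    using integrable_distr_eq[OF coup_fst_meas(2)[OF assms(1)] f] coup_D(4)[OF assms(1)] by simp
qed

lemma coup_int_inner:
  assumes "\<pi> \<in> couplings \<mu> \<nu>" "\<mu> \<in> P2" "\<nu> \<in> P2"
  shows "integrable \<pi> (\<lambda>p. inner (fst p) (snd p))"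
proof -
  have i1: "integrable \<pi> (\<lambda>p. norm (fst p) ^ 2)"
    using coup_int_fst(2)[OF assms(1), of "\<lambda>x. norm x ^ 2"] P2_D(3)[OF assms(2)]
    by (auto intro: continuous_intros)
  have i2: "integrable \<pi> (\<lambda>p. norm (snd p) ^ 2)"
    using coup_int_snd(2)[OF assms(1), of "\<lambda>x. norm x ^ 2"] P2_D(3)[OF assms(3)]
    by (auto intro: continuous_intros)
  have "integrable \<pi> (\<lambda>p. norm (fst p) ^ 2 + norm (snd p) ^ 2)" using i1 i2 by simp
  moreover have "(\<lambda>p. inner (fst p) (snd p)) \<in> borel_measurable \<pi>"
    by (rule meas_sets2[OF coup_D(1)[OF assms(1)]]) (intro continuous_intros)
  moreover have "AE p in \<pi>. norm (inner (fst p) (snd p)) \<le> norm (norm (fst p) ^ 2 + norm (snd p) ^ 2)"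
  proof (intro AE_I2)
    fix p :: "'a \<times> 'a"
    have "norm (inner (fst p) (snd p)) \<le> norm (fst p) * norm (snd p)"
      using Cauchy_Schwarz_ineq2 by simp
    also have "\<dots> \<le> norm (fst p) ^ 2 + norm (snd p) ^ 2"
      using zero_le_square[of "norm (fst p) - norm (snd p)"] zero_le_square[of "norm (fst p)"]
        mult_nonneg_nonneg[OF norm_ge_zero norm_ge_zero, of "fst p" "snd p"]
      by (simp add: power2_eq_square algebra_simps, linarith)
    finally show "norm (inner (fst p) (snd p)) \<le> norm (norm (fst p) ^ 2 + norm (snd p) ^ 2)" by simp
  qed
  ultimately show ?thesis by (rule Bochner_Integration.integrable_bound)
qed


lemma P20_D: "\<nu> \<in> P20 \<Longrightarrow> \<nu> \<in> P2 \<and> mean \<nu> = 0"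
  unfolding P20_def by auto

lemma coup_snd_mean:
  assumes "\<pi> \<in> couplings \<mu> \<nu>" "\<nu> \<in> P20"
  shows "integrable \<pi> snd" "integral\<^sup>L \<pi> snd = 0"
proof -
  have "integrable \<nu> (\<lambda>x. x)" using P2_int_id P20_D[OF assms(2)] by blast
  then show "integrable \<pi> snd"
    using coup_int_snd(2)[OF assms(1), of "\<lambda>x. x"] by (simp add: continuous_on_id)
  show "integral\<^sup>L \<pi> snd = 0"
    using coup_int_snd(1)[OF assms(1), of "\<lambda>x. x"] P20_D[OF assms(2)]
    by (simp add: continuous_on_id mean_def)
qed

lemma coup_identity:
  assumes "\<pi> \<in> couplings \<mu> \<nu>" "\<mu> \<in> P2" "\<nu> \<in> P20"
  shows "(\<integral>p. inner (l *\<^sub>R (fst p - a)) (snd p - l *\<^sub>R (fst p - a)) \<partial>\<pi>)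
     = l * (\<integral>p. inner (fst p) (snd p) \<partial>\<pi>) - l^2 * (\<integral>x. norm (x - a) ^ 2 \<partial>\<mu>)"
proof -
  have nu: "\<nu> \<in> P2" using P20_D[OF assms(3)] by simp
  have pw: "inner (l *\<^sub>R (fst p - a)) (snd p - l *\<^sub>R (fst p - a))
      = l * inner (fst p) (snd p) - l * inner a (snd p) - l^2 * norm (fst p - a) ^ 2" for p
    unfolding power2_norm_eq_inner
    by (simp add: inner_diff_left inner_diff_right inner_commute power2_eq_square algebra_simps)
  have iA: "integrable \<pi> (\<lambda>p. inner (fst p) (snd p))" by (rule coup_int_inner[OF assms(1,2) nu])
  have iB: "integrable \<pi> (\<lambda>p. inner a (snd p))"
    using coup_snd_mean(1)[OF assms(1,3)] by (intro integrable_inner_right) simp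
  have vB: "(\<integral>p. inner a (snd p) \<partial>\<pi>) = 0"
    using coup_snd_mean[OF assms(1,3)] by simp
  have cC: "continuous_on UNIV (\<lambda>x::'a. norm (x - a) ^ 2)" by (intro continuous_intros)
  have iC: "integrable \<pi> (\<lambda>p. norm (fst p - a) ^ 2)"
    using coup_int_fst(2)[OF assms(1), of "\<lambda>x. norm (x - a) ^ 2"] P2_int_sqa[OF assms(2), of a] cC
    by auto
  have vC: "(\<integral>p. norm (fst p - a) ^ 2 \<partial>\<pi>) = (\<integral>x. norm (x - a) ^ 2 \<partial>\<mu>)"
    using coup_int_fst(1)[OF assms(1) cC] by auto
  have "(\<integral>p. inner (l *\<^sub>R (fst p - a)) (snd p - l *\<^sub>R (fst p - a)) \<partial>\<pi>)
     = (\<integral>p. l * inner (fst p) (snd p) - l * inner a (snd p) - l^2 * norm (fst p - a) ^ 2 \<partial>\<pi>)"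
    by (simp only: pw)
  also have "\<dots> = (\<integral>p. l * inner (fst p) (snd p) - l * inner a (snd p) \<partial>\<pi>) - (\<integral>p. l^2 * norm (fst p - a) ^ 2 \<partial>\<pi>)"
    using iA iB iC by (intro Bochner_Integration.integral_diff) auto
  also have "\<dots> = l * (\<integral>p. inner (fst p) (snd p) \<partial>\<pi>) - l * (\<integral>p. inner a (snd p) \<partial>\<pi>) - l^2 * (\<integral>p. norm (fst p - a) ^ 2 \<partial>\<pi>)"
    using iA iB by (subst Bochner_Integration.integral_diff) auto
  finally show ?thesis using vB vC by simp
qed


lemma affine_coupling:
  fixes \<mu> \<nu> :: "'a::euclidean_space measure"
  assumes "\<pi> \<in> couplings \<mu> \<nu>" "\<mu> \<in> P2" "\<nu> \<in> P20"
  shows "\<exists>\<pi>'\<in>couplings (distr \<mu> borel (\<lambda>x. l *\<^sub>R (x - a))) \<nu>.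
     (\<integral>q. inner (fst q - mean \<nu>) (snd q - fst q) \<partial>\<pi>')
     = l * (\<integral>p. inner (fst p) (snd p) \<partial>\<pi>) - l^2 * (\<integral>x. norm (x - a) ^ 2 \<partial>\<mu>)"
proof -
  define g where "g = (\<lambda>x::'a. l *\<^sub>R (x - a))"
  define T where "T = (\<lambda>p::'a\<times>'a. (g (fst p), snd p))"
  have Tm: "T \<in> \<pi> \<rightarrow>\<^sub>M borel" unfolding T_def g_def
    by (rule meas_sets3[OF coup_D(1)[OF assms(1)]]) (intro continuous_intros)
  have gm: "g \<in> borel \<rightarrow>\<^sub>M borel" unfolding g_def
    by (intro borel_measurable_continuous_onI continuous_intros)
  have fm: "(fst :: 'a\<times>'a \<Rightarrow> 'a) \<in> borel \<rightarrow>\<^sub>M borel" "(snd :: 'a\<times>'a \<Rightarrow> 'a) \<in> borel \<rightarrow>\<^sub>M borel"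
    by (intro borel_measurable_continuous_onI continuous_intros)+
  define \<pi>' where "\<pi>' = distr \<pi> borel T"
  have "\<pi>' \<in> couplings (distr \<mu> borel g) \<nu>"
    unfolding couplings_def
  proof (intro CollectI conjI)
    show "sets \<pi>' = sets borel" unfolding \<pi>'_def by simp
    show "prob_space \<pi>'" unfolding \<pi>'_def
      using prob_space.prob_space_distr[OF coup_D(2)[OF assms(1)] Tm] .
    have "distr \<pi>' borel fst = distr \<pi> borel (fst \<circ> T)"
      unfolding \<pi>'_def by (rule distr_distr[OF fm(1) Tm])
    also have "fst \<circ> T = g \<circ> fst" unfolding T_def by auto
    also have "distr \<pi> borel (g \<circ> fst) = distr (distr \<pi> borel fst) borel g"
      by (rule distr_distr[OF gm coup_fst_meas(1)[OF assms(1)], symmetric])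
    finally show "distr \<pi>' borel fst = distr \<mu> borel g" using coup_D(3)[OF assms(1)] by simp
    have "distr \<pi>' borel snd = distr \<pi> borel (snd \<circ> T)"
      unfolding \<pi>'_def by (rule distr_distr[OF fm(2) Tm])
    also have "snd \<circ> T = snd" unfolding T_def by auto
    finally show "distr \<pi>' borel snd = \<nu>" using coup_D(4)[OF assms(1)] by simp
  qed
  moreover have "(\<integral>q. inner (fst q - mean \<nu>) (snd q - fst q) \<partial>\<pi>')
     = l * (\<integral>p. inner (fst p) (snd p) \<partial>\<pi>) - l^2 * (\<integral>x. norm (x - a) ^ 2 \<partial>\<mu>)"
  proof -
    have hm: "(\<lambda>q::'a\<times>'a. inner (fst q - mean \<nu>) (snd q - fst q)) \<in> borel_measurable borel"
      by (intro borel_measurable_continuous_onI continuous_intros)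
    have "(\<integral>q. inner (fst q - mean \<nu>) (snd q - fst q) \<partial>\<pi>')
       = (\<integral>p. inner (fst (T p) - mean \<nu>) (snd (T p) - fst (T p)) \<partial>\<pi>)"
      unfolding \<pi>'_def by (rule integral_distr[OF Tm hm])
    also have "\<dots> = (\<integral>p. inner (l *\<^sub>R (fst p - a)) (snd p - l *\<^sub>R (fst p - a)) \<partial>\<pi>)"
      using P20_D[OF assms(3)] by (simp add: T_def g_def)
    finally show ?thesis using coup_identity[OF assms] by simp
  qed
  ultimately show ?thesis unfolding g_def by blast
qed


lemma var_affine:
  fixes \<mu> :: "'a::euclidean_space measure"
  assumes "\<mu> \<in> P2"
  shows "Var (distr \<mu> borel (\<lambda>x. l *\<^sub>R (x - a))) = l^2 * Var \<mu>"
proof -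
  interpret P: prob_space \<mu> using P2_D[OF assms] by simp
  define g where "g = (\<lambda>x::'a. l *\<^sub>R (x - a))"
  have gm: "g \<in> \<mu> \<rightarrow>\<^sub>M borel" unfolding g_def
    by (rule meas_sets[OF P2_D(1)[OF assms]]) (intro continuous_intros)
  have iid: "integrable \<mu> (\<lambda>x. x)" by (rule P2_int_id[OF assms])
  have m: "mean (distr \<mu> borel g) = l *\<^sub>R (mean \<mu> - a)"
  proof -
    have "mean (distr \<mu> borel g) = (\<integral>x. g x \<partial>\<mu>)" unfolding mean_def
      by (rule integral_distr[OF gm]) (intro borel_measurable_continuous_onI continuous_intros)
    also have "\<dots> = l *\<^sub>R (\<integral>x. x - a \<partial>\<mu>)" unfolding g_def by simp
    also have "(\<integral>x. x - a \<partial>\<mu>) = (\<integral>x. x \<partial>\<mu>) - (\<integral>x. a \<partial>\<mu>)"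
      using iid by (intro Bochner_Integration.integral_diff) auto
    also have "(\<integral>x. a \<partial>\<mu>) = a" by (simp add: P.prob_space)
    finally show ?thesis unfolding mean_def .
  qed
  have cm: "(\<lambda>y::'a. norm (y - l *\<^sub>R (mean \<mu> - a)) ^ 2) \<in> borel_measurable borel"
    by (intro borel_measurable_continuous_onI continuous_intros)
  have "Var (distr \<mu> borel g) = (\<integral>x. norm (g x - l *\<^sub>R (mean \<mu> - a)) ^ 2 \<partial>\<mu>)"
    unfolding Var_def m by (rule integral_distr[OF gm cm])
  also have "\<dots> = (\<integral>x. l^2 * norm (x - mean \<mu>) ^ 2 \<partial>\<mu>)"
  proof (rule Bochner_Integration.integral_cong[OF refl])
    fix x
    have "g x - l *\<^sub>R (mean \<mu> - a) = l *\<^sub>R (x - mean \<mu>)"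
      unfolding g_def by (simp add: algebra_simps)
    then show "norm (g x - l *\<^sub>R (mean \<mu> - a)) ^ 2 = l^2 * norm (x - mean \<mu>) ^ 2"
      by (simp add: power_mult_distrib)
  qed
  also have "\<dots> = l^2 * Var \<mu>" unfolding Var_def by simp
  finally show ?thesis unfolding g_def .
qed

lemma var_moment:
  fixes \<mu> :: "'a::euclidean_space measure"
  assumes "\<mu> \<in> P2"
  shows "Var \<mu> = (\<integral>x. norm x ^ 2 \<partial>\<mu>) - norm (mean \<mu>) ^ 2"
proof -
  interpret P: prob_space \<mu> using P2_D[OF assms] by simp
  define m where "m = mean \<mu>"
  have iid: "integrable \<mu> (\<lambda>x. x)" by (rule P2_int_id[OF assms])
  have i2: "integrable \<mu> (\<lambda>x. norm x ^ 2)" by (rule P2_D(3)[OF assms])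
  have pw: "norm (x - m) ^ 2 = norm x ^ 2 - 2 * inner x m + norm m ^ 2" for x
    unfolding power2_norm_eq_inner
    by (simp add: inner_diff_left inner_diff_right inner_commute algebra_simps)
  have i3: "integrable \<mu> (\<lambda>x. 2 * inner x m)" using iid by simp
  have "Var \<mu> = (\<integral>x. norm x ^ 2 - 2 * inner x m + norm m ^ 2 \<partial>\<mu>)"
    unfolding Var_def m_def[symmetric] pw ..
  also have "\<dots> = (\<integral>x. norm x ^ 2 - 2 * inner x m \<partial>\<mu>) + (\<integral>x. norm m ^ 2 \<partial>\<mu>)"
    using i2 i3 by (intro Bochner_Integration.integral_add) auto
  also have "(\<integral>x. norm x ^ 2 - 2 * inner x m \<partial>\<mu>) = (\<integral>x. norm x ^ 2 \<partial>\<mu>) - (\<integral>x. 2 * inner x m \<partial>\<mu>)"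
    using i2 i3 by (intro Bochner_Integration.integral_diff) auto
  also have "(\<integral>x. 2 * inner x m \<partial>\<mu>) = 2 * inner m m"
    using iid by (simp add: m_def mean_def)
  finally show ?thesis by (simp add: power2_norm_eq_inner m_def P.prob_space)
qed

lemma ae_zero:
  fixes a :: "'a::euclidean_space"
  assumes "\<pi> \<in> couplings \<mu> \<nu>" "\<mu> \<in> P2" "\<nu> \<in> P20" "(\<integral>x. norm (x - a) ^ 2 \<partial>\<mu>) = 0"
  shows "(\<integral>p. inner (fst p) (snd p) \<partial>\<pi>) = 0"
proof -
  have "AE x in \<mu>. norm (x - a) ^ 2 = 0"
    using integral_nonneg_eq_0_iff_AE[OF P2_int_sqa[OF assms(2)]] assms(4) by simp
  hence "AE x in distr \<pi> borel fst. norm (x - a) ^ 2 = 0" unfolding coup_D(3)[OF assms(1)] .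
  moreover have pr: "Measurable.pred borel (\<lambda>x. norm (x - a)^2 = 0)" by measurable
  ultimately have "AE p in \<pi>. norm (fst p - a) ^ 2 = 0"
    using AE_distr_iff[OF coup_fst_meas(1)[OF assms(1)] pr[unfolded pred_def]] by simp
  hence ae: "AE p in \<pi>. inner (fst p) (snd p) = inner a (snd p)" by (auto elim!: AE_mp)
  have "(\<integral>p. inner (fst p) (snd p) \<partial>\<pi>) = (\<integral>p. inner a (snd p) \<partial>\<pi>)"
  proof (rule integral_cong_AE[OF _ _ ae])
    show "(\<lambda>p. inner (fst p) (snd p)) \<in> borel_measurable \<pi>"
      by (rule meas_sets2[OF coup_D(1)[OF assms(1)]]) (intro continuous_intros)
    show "(\<lambda>p. inner a (snd p)) \<in> borel_measurable \<pi>"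
      by (rule meas_sets2[OF coup_D(1)[OF assms(1)]]) (intro continuous_intros)
  qed
  also have "\<dots> = 0" using coup_snd_mean[OF assms(1,3)] by simp
  finally show ?thesis .
qed

lemma MK_ex:
  assumes "\<mu> \<in> MK \<nu>" "\<nu> \<in> P20"
  shows "\<exists>\<pi>\<in>couplings \<mu> \<nu>. (\<integral>p. inner (fst p) (snd p) \<partial>\<pi>) = (\<integral>x. norm x ^ 2 \<partial>\<mu>)"
proof -
  have mu: "\<mu> \<in> P2" using assms(1) unfolding MK_def by auto
  obtain \<pi> where p: "\<pi> \<in> couplings \<mu> \<nu>" "(\<integral>p. inner (fst p - mean \<nu>) (snd p - fst p) \<partial>\<pi>) = 0"
    using assms(1) unfolding MK_def kantorovich_dom_def by auto
  have "(\<integral>p. inner (1 *\<^sub>R (fst p - 0)) (snd p - 1 *\<^sub>R (fst p - 0)) \<partial>\<pi>) = 0"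
    using p(2) P20_D[OF assms(2)] by simp
  then show ?thesis using coup_identity[OF p(1) mu assms(2), of 1 0] p(1) by auto
qed


lemma Var_nonneg: "0 \<le> Var \<mu>" unfolding Var_def by simp

lemma sq_nonneg_int: "0 \<le> (\<integral>x. norm (x::'a::euclidean_space) ^ 2 \<partial>\<mu>)" by simp

theorem mainTheorem13:
  fixes \<nu> :: "('a::euclidean_space) measure" and D :: "'a measure set"
  assumes "\<nu> \<in> P20" and "D \<subseteq> P2" and "is_cone D"
  shows "(\<forall>\<mu>s \<pi>s. (\<mu>s \<in> D \<inter> MK \<nu> \<and> (\<forall>\<mu>\<in>D \<inter> MK \<nu>. Var \<mu> \<le> Var \<mu>s))
            \<longrightarrow> (\<pi>s \<in> couplings \<mu>s \<nu> \<and>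
                 (\<forall>\<pi>\<in>couplings \<mu>s \<nu>. (\<integral>p. inner (fst p) (snd p) \<partial>\<pi>) \<le> (\<integral>p. inner (fst p) (snd p) \<partial>\<pi>s)))
            \<longrightarrow> (\<integral>p. inner (fst p) (snd p) \<partial>\<pi>s) = (\<integral>x. (norm x)^2 \<partial>\<mu>s))
       \<and> (translation_invariant D \<longrightarrow>
           (\<forall>\<mu>s. (\<mu>s \<in> D \<inter> MK \<nu> \<and> (\<forall>\<mu>\<in>D \<inter> MK \<nu>. Var \<mu> \<le> Var \<mu>s)) \<longrightarrow> mean \<mu>s = 0))"
proof (intro conjI allI impI; elim conjE)
  fix \<mu>s :: "'a measure" and \<pi>s
  assume hm: "\<mu>s \<in> D \<inter> MK \<nu>" and hmax: "\<forall>\<mu>\<in>D \<inter> MK \<nu>. Var \<mu> \<le> Var \<mu>s"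
    and hp: "\<pi>s \<in> couplings \<mu>s \<nu>"
    and hopt: "\<forall>\<pi>\<in>couplings \<mu>s \<nu>. (\<integral>p. inner (fst p) (snd p) \<partial>\<pi>) \<le> (\<integral>p. inner (fst p) (snd p) \<partial>\<pi>s)"
  have mu: "\<mu>s \<in> P2" using hm assms(2) by auto
  define C where "C = (\<integral>p. inner (fst p) (snd p) \<partial>\<pi>s)"
  define M where "M = (\<integral>x. (norm x)^2 \<partial>\<mu>s)"
  obtain \<pi>0 where p0: "\<pi>0 \<in> couplings \<mu>s \<nu>" "(\<integral>p. inner (fst p) (snd p) \<partial>\<pi>0) = M"
    using MK_ex[OF _ assms(1), of \<mu>s] hm unfolding M_def by auto
  have MC: "M \<le> C" using hopt p0 unfolding C_def by auto
  have M0: "0 \<le> M" unfolding M_def by (rule sq_nonneg_int)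
  show "C = M" unfolding C_def[symmetric] M_def[symmetric]
  proof (rule ccontr)
    assume "C \<noteq> M"
    hence CM: "M < C" using MC by simp
    have "\<exists>a. (\<integral>x. norm (x - a) ^ 2 \<partial>\<mu>s) = 0"
    proof (cases "M = 0")
      case True then show ?thesis by (intro exI[of _ 0]) (simp add: M_def)
    next
      case False
      hence Mp: "0 < M" using M0 by simp
      define l where "l = C / M"
      have l1: "1 < l" using CM Mp by (simp add: l_def)
      have lM: "l * M = C" using Mp by (simp add: l_def)
      define \<mu>' where "\<mu>' = distr \<mu>s borel (\<lambda>x. l *\<^sub>R (x - 0))"
      have "\<mu>' = distr \<mu>s borel (\<lambda>x. l *\<^sub>R x)" unfolding \<mu>'_def by simp
      hence inD: "\<mu>' \<in> D" using assms(3) hm l1 unfolding is_cone_def by auto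
      hence P2': "\<mu>' \<in> P2" using assms(2) by auto
      obtain \<pi>' where pp: "\<pi>' \<in> couplings \<mu>' \<nu>"
        "(\<integral>q. inner (fst q - mean \<nu>) (snd q - fst q) \<partial>\<pi>')
          = l * C - l^2 * (\<integral>x. norm (x - 0) ^ 2 \<partial>\<mu>s)"
        using affine_coupling[OF hp mu assms(1), of l 0] unfolding \<mu>'_def C_def by blast
      moreover have "l * C - l^2 * (\<integral>x. norm (x - 0) ^ 2 \<partial>\<mu>s) = 0"
        using lM by (simp add: M_def power2_eq_square algebra_simps)
      ultimately have "kantorovich_dom \<mu>' \<nu>" unfolding kantorovich_dom_def by auto
      hence "\<mu>' \<in> D \<inter> MK \<nu>" using inD P2' unfolding MK_def by auto
      hence "Var \<mu>' \<le> Var \<mu>s" using hmax by blast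
      hence le: "l^2 * Var \<mu>s \<le> Var \<mu>s" using var_affine[OF mu, of l 0] unfolding \<mu>'_def by simp
      have "1 < l^2" using l1 by (simp add: one_less_power)
      hence "(l^2 - 1) * Var \<mu>s \<le> 0" "0 < l^2 - 1" using le by (simp_all add: algebra_simps)
      hence "Var \<mu>s \<le> 0" by (simp add: mult_le_0_iff)
      hence "Var \<mu>s = 0" using Var_nonneg[of \<mu>s] by simp
      then show ?thesis unfolding Var_def by blast
    qed
    then obtain a where "(\<integral>x. norm (x - a) ^ 2 \<partial>\<mu>s) = 0" by blast
    hence "C = 0" using ae_zero[OF hp mu assms(1)] by (simp add: C_def)
    thus False using CM M0 by simp
  qed
next
  fix \<mu>s :: "'a measure"
  assume TI: "translation_invariant D" and hm: "\<mu>s \<in> D \<inter> MK \<nu>"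
    and hmax: "\<forall>\<mu>\<in>D \<inter> MK \<nu>. Var \<mu> \<le> Var \<mu>s"
  have mu: "\<mu>s \<in> P2" using hm assms(2) by auto
  define a where "a = mean \<mu>s"
  define M where "M = (\<integral>x. (norm x)^2 \<partial>\<mu>s)"
  define V where "V = Var \<mu>s"
  obtain \<pi>0 where p0: "\<pi>0 \<in> couplings \<mu>s \<nu>" "(\<integral>p. inner (fst p) (snd p) \<partial>\<pi>0) = M"
    using MK_ex[OF _ assms(1), of \<mu>s] hm unfolding M_def by auto
  have VM: "V = M - norm a ^ 2" unfolding V_def M_def a_def by (rule var_moment[OF mu])
  have V0: "0 \<le> V" unfolding V_def by (rule Var_nonneg)
  have "norm a ^ 2 = 0"
  proof (cases "V = 0")
    case True
    hence "(\<integral>x. norm (x - a) ^ 2 \<partial>\<mu>s) = 0" unfolding V_def Var_def a_def .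
    hence "M = 0" using ae_zero[OF p0(1) mu assms(1)] p0(2) by simp
    then show ?thesis using VM True by simp
  next
    case False
    hence Vp: "0 < V" using V0 by simp
    define l where "l = M / V"
    have MV: "V \<le> M" using VM by simp
    have l1: "1 \<le> l" using MV Vp by (simp add: l_def)
    have lV: "l * V = M" using Vp by (simp add: l_def)
    define \<mu>' where "\<mu>' = distr \<mu>s borel (\<lambda>x. l *\<^sub>R (x - a))"
    have tm: "(\<lambda>x. x + - a) \<in> \<mu>s \<rightarrow>\<^sub>M borel"
      by (rule meas_sets[OF P2_D(1)[OF mu]]) (intro continuous_intros)
    have sm: "(\<lambda>x::'a. l *\<^sub>R x) \<in> borel \<rightarrow>\<^sub>M borel"
      by (intro borel_measurable_continuous_onI continuous_intros)
    have "distr (distr \<mu>s borel (\<lambda>x. x + - a)) borel (\<lambda>x. l *\<^sub>R x)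
        = distr \<mu>s borel ((\<lambda>x. l *\<^sub>R x) \<circ> (\<lambda>x. x + - a))"
      by (rule distr_distr[OF sm tm])
    also have "(\<lambda>x. l *\<^sub>R x) \<circ> (\<lambda>x. x + - a) = (\<lambda>x. l *\<^sub>R (x - a))" by (auto simp: comp_def)
    finally have eq: "\<mu>' = distr (distr \<mu>s borel (\<lambda>x. x + - a)) borel (\<lambda>x. l *\<^sub>R x)"
      unfolding \<mu>'_def by simp
    have "distr \<mu>s borel (\<lambda>x. x + - a) \<in> D" using TI hm unfolding translation_invariant_def by blast
    hence inD: "\<mu>' \<in> D" using assms(3) l1 unfolding eq is_cone_def by auto
    hence P2': "\<mu>' \<in> P2" using assms(2) by auto
    obtain \<pi>' where pp: "\<pi>' \<in> couplings \<mu>' \<nu>"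
      "(\<integral>q. inner (fst q - mean \<nu>) (snd q - fst q) \<partial>\<pi>')
        = l * M - l^2 * (\<integral>x. norm (x - a) ^ 2 \<partial>\<mu>s)"
      using affine_coupling[OF p0(1) mu assms(1), of l a] p0(2) unfolding \<mu>'_def by auto
    moreover have "l * M - l^2 * (\<integral>x. norm (x - a) ^ 2 \<partial>\<mu>s) = 0"
      using lV unfolding V_def Var_def a_def[symmetric] by (simp add: power2_eq_square algebra_simps)
    ultimately have "kantorovich_dom \<mu>' \<nu>" unfolding kantorovich_dom_def by auto
    hence "\<mu>' \<in> D \<inter> MK \<nu>" using inD P2' unfolding MK_def by auto
    hence "Var \<mu>' \<le> Var \<mu>s" using hmax by blast
    hence le: "l^2 * V \<le> V" using var_affine[OF mu, of l a] unfolding \<mu>'_def V_def by simp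
    hence "l^2 \<le> 1" using Vp by (simp add: mult_le_cancel_right1)
    hence "l \<le> 1" using l1 by (simp add: power_le_one_iff)
    hence "l = 1" using l1 by simp
    hence "M = V" using lV by simp
    then show ?thesis using VM by simp
  qed
  thus "mean \<mu>s = 0" unfolding a_def by simp
qed

end
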